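(* For every integer $d>1$ there exist a rational function $r$ of degree $d$ and $2d-2$ distinct points $c_1,\dots,c_{2d-2}\in\mathbb C$ such that $r'(c_j)=0$ and $r(c_j)=\overline{c_j}$ for all $j$. *)

theory Defs
  imports "HOL-Analysis.Analysis" "HOL-Computational_Algebra.Polynomial"
begin

text \<open>A complex rational function is represented by a pair of polynomials p, q
  in lowest terms (coprime, q nonzero); its degree is max (deg p) (deg q),
  and as a function it is z maps to p(z)/q(z) (defined where q(z) is nonzero).\<close>

definition is_rational_fun_of_degree :: "complex poly \<Rightarrow> complex poly \<Rightarrow> nat \<Rightarrow> bool" where
  "is_rational_fun_of_degree p q d \<longleftrightarrow> q \<noteq> 0 \<and> coprime p q \<and> max (degree p) (degree q) = d"

definition rat_eval :: "complex poly \<Rightarrow> complex poly \<Rightarrow> complex \<Rightarrow> complex" where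
  "rat_eval p q z = poly p z / poly q z"

end

theory Submission
  imports Defs "HOL-Computational_Algebra.Fundamental_Theorem_Algebra"
begin


definition S :: "nat \<Rightarrow> real \<Rightarrow> real" where "S n t = (\<Sum>i<n. t^i)"

lemma S_pos: "n \<ge> 1 \<Longrightarrow> t \<ge> 0 \<Longrightarrow> S n t \<ge> 1"
proof -
  assume "n \<ge> 1" "t \<ge> 0"
  then obtain k where "n = Suc k" by (cases n) auto
  then have "S n t = 1 + (\<Sum>i<k. t^(Suc i))" unfolding S_def
    by (simp only: sum.lessThan_Suc_shift) simp
  moreover have "(\<Sum>i<k. t^(Suc i)) \<ge> 0" using \<open>t \<ge> 0\<close> by (intro sum_nonneg) auto
  ultimately show ?thesis by simp
qed

lemma S_le: "0 \<le> t \<Longrightarrow> t < 1 \<Longrightarrow> S n t \<le> 1/(1-t)"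
proof -
  assume a: "0 \<le> t" "t < 1"
  have "(1 - t) * S n t = 1 - t^n" unfolding S_def by (simp add: one_diff_power_eq)
  also have "\<dots> \<le> 1" using a by simp
  finally show ?thesis using a by (simp add: field_simps mult.commute)
qed

lemma S_one: "S n 1 = real n" unfolding S_def by simp

lemma S_cont: "continuous_on A (S n)" unfolding S_def[abs_def] by (intro continuous_intros)

lemma S_split: "S (n+4) t = S n t + t^n + t^(n+1) + t^(n+2) + t^(n+3)"
  unfolding S_def by (simp add: eval_nat_numeral algebra_simps)

lemma S_geom: "(1 - t) * S n t = 1 - t^n" unfolding S_def by (simp add: one_diff_power_eq)

definition Ef :: "nat \<Rightarrow> real \<Rightarrow> real" where "Ef m t = S (m+4) t / (t^2 * S m t)"
definition psi :: "nat \<Rightarrow> real \<Rightarrow> real" where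
  "psi m t = (m+1) * Ef m t ^ 2 * t^(m+2) - Ef m t * ((t^(m+2))^2 + 1) - (m+3) * t^(m+2)"

lemma psi_one: assumes "m \<ge> 1" shows "psi m 1 > 0"
proof -
  have E: "Ef m 1 = (m+4)/m" unfolding Ef_def S_one by simp
  have "psi m 1 = 4*(m+2)^2/ m^2" unfolding psi_def E using assms
    by (simp add: field_simps power2_eq_square)
  then show ?thesis using assms by simp
qed

lemma pow_bound: assumes "m \<ge> 1" shows "74 * (real m + 1) \<le> 8^(m+2)"
proof -
  have "m + 1 < 2^(m+1)" by (induction m) auto
  then have "real (m + 1) \<le> real (2^(m+1))" by linarith
  then have a: "real m + 1 \<le> 2^(m+1)" by simp
  have e: "(8::real)^(m+2) = 2^(2*m+5) * 2^(m+1)"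
    by (simp add: power_add power_mult flip: power_mult_distrib)
  have "(2::real)^(2*m+5) \<ge> 2^7" using assms by (intro power_increasing) auto
  then have b: "(2::real)^(2*m+5) \<ge> 74" by simp
  have "74 * (real m + 1) \<le> 2^(2*m+5) * 2^(m+1)"
    using a b by (intro mult_mono) auto
  then show ?thesis by (simp only: e)
qed

lemma psi_small: assumes "m \<ge> 1" shows "psi m (1/8) < 0"
proof -
  define E where "E = Ef m (1/8)"
  define W where "W = (1/8::real)^(m+2)"
  have S1: "S (m+4) (1/8) \<le> 8/7" using S_le[of "1/8" "m+4"] by simp
  have S2: "S m (1/8) \<ge> 1" using S_pos assms by simp
  have S3: "S (m+4) (1/8) \<ge> 1" using S_pos by simp
  have Epos: "E > 0" unfolding E_def Ef_def using S2 S3 by simp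
  have Ele: "E \<le> 512/7" unfolding E_def Ef_def using S1 S2
    by (simp add: field_simps)
  have Wpos: "W > 0" unfolding W_def by simp
  have "(real m+1) * E * W \<le> (real m + 1) * (512/7) * W"
    using Ele Wpos by (intro mult_right_mono mult_left_mono) auto
  also have "\<dots> < 1"
  proof -
    have "W * 8^(m+2) = 1" unfolding W_def by (simp add: flip: power_mult_distrib)
    then have "(real m + 1) * 74 * W \<le> 1" using pow_bound[OF assms] Wpos
      by (smt (verit) mult.commute mult_left_mono)
    moreover have "(real m + 1) * W > 0" using Wpos by simp
    ultimately show ?thesis by (simp add: algebra_simps)
  qed
  finally have "(real m+1) * E * W < 1" .
  then have X: "((real m+1) * E * W) * E < 1 * E" using Epos by (intro mult_strict_right_mono) auto
  have "(real m+1) * E^2 * W = ((real m+1) * E * W) * E" by (simp add: power2_eq_square algebra_simps)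
  with X have A1: "(real m+1) * E^2 * W < E" by (simp only: mult_1)
  have A2: "E * (W^2 + 1) \<ge> E" using Epos by (simp add: algebra_simps)
  have A3: "(real m + 3) * W > 0" using Wpos by simp
  have "psi m (1/8) = (real m+1) * E^2 * W - E * (W^2 + 1) - (real m + 3) * W"
    unfolding psi_def E_def W_def by simp
  then have "psi m (1/8) < 0" using A1 A2 A3 by linarith
  then show ?thesis .
qed



lemma rat_deriv0:
  assumes "poly q c \<noteq> 0" "poly (pderiv p) c * poly q c - poly p c * poly (pderiv q) c = 0"
  shows "(rat_eval p q has_field_derivative 0) (at c)"
proof -
  have "((\<lambda>z. poly p z / poly q z) has_field_derivative
      (poly (pderiv p) c * poly q c - poly p c * poly (pderiv q) c) / (poly q c * poly q c)) (at c)"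
    by (rule DERIV_divide[OF poly_DERIV poly_DERIV assms(1)])
  then show ?thesis using assms(2) unfolding rat_eval_def[abs_def] by simp
qed

lemma coprime_no_common:
  fixes p q :: "complex poly"
  assumes "\<And>x. poly p x = 0 \<Longrightarrow> poly q x \<noteq> 0"
  shows "coprime p q"
proof (rule coprimeI)
  fix g assume gp: "g dvd p" and gq: "g dvd q"
  show "is_unit g"
  proof (rule ccontr)
    assume nu: "\<not> is_unit g"
    have "g \<noteq> 0"
    proof
      assume "g = 0"
      then have "p = 0" "q = 0" using gp gq by auto
      then show False using assms[of 0] by simp
    qed
    then have "degree g \<noteq> 0" using nu is_unit_iff_degree by blast
    then have "\<not> constant (poly g)" by (simp add: constant_degree)
    then obtain x where x: "poly g x = 0" using fundamental_theorem_of_algebra by blast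
    from gp obtain r where "p = g * r" by (auto elim: dvdE)
    then have "poly p x = 0" using x by simp
    moreover from gq obtain s where "q = g * s" by (auto elim: dvdE)
    then have "poly q x = 0" using x by simp
    ultimately show False using assms by blast
  qed
qed

lemma point:
  fixes m :: nat and E w :: real and c :: complex
  assumes c0: "c \<noteq> 0" and cw: "c^(m+2) = of_real w" and w0: "w > 0" and E0: "E > 0"
    and crit: "(m+1)*E^2*w - E*w^2 - E - (m+3)*w = 0"
    and val: "E*w + 1 = (norm c)^2 * (w + E)"
  shows "poly (monom 1 (m+3) + monom (of_real E) 1) c \<noteq> 0 \<and>
    (rat_eval (monom (of_real E) (m+2) + 1) (monom 1 (m+3) + monom (of_real E) 1) has_field_derivative 0) (at c) \<and>
    rat_eval (monom (of_real E) (m+2) + 1) (monom 1 (m+3) + monom (of_real E) 1) c = cnj c"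
proof -
  define e where "e = complex_of_real E"
  define ww where "ww = complex_of_real w"
  define p where "p = monom e (m+2) + 1"
  define q where "q = monom 1 (m+3) + monom e 1"
  define v where "v = c^(m+1)"
  have vc: "v * c = ww" unfolding v_def ww_def using cw by (simp add: ac_simps)
  have c3: "c^(m+3) = v * c * c" unfolding v_def by (simp add: eval_nat_numeral)
  have c2: "c^(m+2) = v * c" unfolding v_def by (simp add: eval_nat_numeral)
  have cw2: "c * (c * c ^ m) = ww" using cw unfolding ww_def by (simp add: eval_nat_numeral)
  have nz: "ww + e \<noteq> 0"
  proof -
    have "ww + e = complex_of_real (w + E)" unfolding ww_def e_def by simp
    moreover have "w + E \<noteq> 0" using w0 E0 by simp
    ultimately show ?thesis by (metis of_real_eq_0_iff)
  qed
  have pq: "poly q c = c * (ww + e)" unfolding q_def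
    by (simp add: poly_monom c3 vc[symmetric] algebra_simps)
  have pp: "poly p c = e * ww + 1" unfolding p_def by (simp only: poly_add poly_monom cw ww_def) simp
  have qnz: "poly q c \<noteq> 0" using pq c0 nz by simp
  have dp: "poly (pderiv p) c = of_nat (m+2) * e * v" unfolding p_def v_def
    by (simp add: pderiv_add pderiv_monom poly_monom)
  have dq: "poly (pderiv q) c = of_nat (m+3) * ww + e" unfolding q_def
    by (simp add: pderiv_add pderiv_monom poly_monom cw2)
  have "poly (pderiv p) c * poly q c - poly p c * poly (pderiv q) c
      = of_nat (m+2) * e * (v * c) * (ww + e) - (e * ww + 1) * (of_nat (m+3) * ww + e)"
    unfolding dp pq pp dq by (simp add: algebra_simps)
  also have "\<dots> = complex_of_real ((m+1)*E^2*w - E*w^2 - E - (m+3)*w)"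
    unfolding vc unfolding e_def ww_def by (simp add: algebra_simps power2_eq_square)
  also have "\<dots> = 0" using crit by simp
  finally have N: "poly (pderiv p) c * poly q c - poly p c * poly (pderiv q) c = 0" .
  have cn: "cnj c = complex_of_real ((norm c)^2) / c" using c0
    using complex_norm_square[of c] by (simp add: field_simps)
  have "rat_eval p q c = (e * ww + 1) / (c * (ww + e))" unfolding rat_eval_def pq pp ..
  also have "e * ww + 1 = complex_of_real ((norm c)^2) * (ww + e)"
    unfolding e_def ww_def using arg_cong[OF val, of complex_of_real] by (simp add: algebra_simps)
  also have "complex_of_real ((norm c)^2) * (ww + e) / (c * (ww + e)) = complex_of_real ((norm c)^2) / c"
    by (rule mult_divide_mult_cancel_right[OF nz])
  also have "\<dots> = cnj c" using cn by simp
  finally have V: "rat_eval p q c = cnj c" .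
  show ?thesis using qnz rat_deriv0[OF qnz N] V unfolding p_def q_def e_def by simp
qed



definition good :: "nat \<Rightarrow> bool" where
  "good d \<longleftrightarrow> (\<exists>p q :: complex poly. is_rational_fun_of_degree p q d \<and>
           (\<exists>c :: nat \<Rightarrow> complex. inj_on c {1..2*d-2} \<and>
              (\<forall>j\<in>{1..2*d-2}. poly q (c j) \<noteq> 0 \<and>
                 (rat_eval p q has_field_derivative 0) (at (c j)) \<and>
                 rat_eval p q (c j) = cnj (c j))))"

lemma S_cont': "continuous_on A f \<Longrightarrow> continuous_on A (\<lambda>x. S n (f x))"
  unfolding S_def by (intro continuous_intros)

lemma exists_t: assumes m: "m \<ge> 1" shows "\<exists>t. 1/8 \<le> t \<and> t < 1 \<and> psi m t = 0"
proof -
  have nz: "x^2 * S m x \<noteq> 0" if "x \<in> {1/8..1}" for x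
  proof -
    have "S m x \<ge> 1" using S_pos m that by simp
    then show ?thesis using that by simp
  qed
  have cont: "continuous_on {1/8..1} (psi m)"
    unfolding psi_def[abs_def] Ef_def
    by (intro continuous_intros S_cont') (use nz in auto)
  obtain t where t: "1/8 \<le> t" "t \<le> 1" "psi m t = 0"
    using IVT'[of "psi m" "1/8" 0 1, OF less_imp_le[OF psi_small[OF m]] less_imp_le[OF psi_one[OF m]] _ cont]
    by auto
  moreover have "t \<noteq> 1" using t psi_one[OF m] by auto
  ultimately show ?thesis by auto
qed

lemma t_facts:
  assumes m: "m \<ge> 1" and t: "0 < t" "t < 1"
  shows "Ef m t > 1" "Ef m t * t^(m+2) + 1 = t^2 * (t^(m+2) + Ef m t)"
proof -
  define E where "E = Ef m t"
  have Sm: "S m t \<ge> 1" using S_pos m t by simp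
  have key: "E * t^2 * S m t = S (m+4) t" unfolding E_def Ef_def using Sm t by simp
  have pos: "0 < t^m + t^(m+1) + t^(m+2) + t^(m+3)" using t by (intro add_pos_pos) auto
  have "S (m+4) t > S m t" unfolding S_split using pos by linarith
  then have l1: "1 * S m t < E * t^2 * S m t" using key by simp
  have Et: "1 < E * t^2" by (rule mult_right_less_imp_less[OF l1]) (use Sm in auto)
  have t2: "t^2 \<le> 1" using t by (simp add: power_le_one)
  have t2p: "t^2 > 0" using t by simp
  have "0 < E * t^2" using Et by simp
  then have E0: "E > 0" using t2p by (simp add: zero_less_mult_iff)
  have "E > 1"
  proof (rule ccontr)
    assume "\<not> E > 1"
    then have "E * t^2 \<le> 1 * 1" using E0 t2 t2p by (intro mult_mono) auto
    then show False using Et by simp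
  qed
  then show "Ef m t > 1" unfolding E_def .
  have "(1 - t) * (E * t^2 * S m t) = E * t^2 * ((1 - t) * S m t)" by (simp add: algebra_simps)
  then have "E * t^2 * ((1 - t) * S m t) = (1 - t) * S (m+4) t" using key by simp
  then have h: "E * t^2 * (1 - t^m) = 1 - t^(m+4)" using S_geom[of t m] S_geom[of t "m+4"] by simp
  have p2: "t^(m+2) = t^2 * t^m" and p4: "t^(m+4) = t^2 * t^2 * t^m"
    by (simp_all add: power_add eval_nat_numeral)
  have "E * (t^2 * t^m) + 1 - t^2 * (t^2 * t^m + E) = (1 - t^2 * t^2 * t^m) - E * t^2 * (1 - t^m)"
    by (simp add: algebra_simps)
  also have "\<dots> = 0" using h unfolding p4 by simp
  finally have "E * (t^2 * t^m) + 1 = t^2 * (t^2 * t^m + E)" by simp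
  then show "Ef m t * t^(m+2) + 1 = t^2 * (t^(m+2) + Ef m t)" unfolding E_def[symmetric] p2 .
qed



lemma case_gen: assumes m: "m \<ge> 1" shows "good (m+3)"
proof -
  obtain t where t: "1/8 \<le> t" "t < 1" "psi m t = 0" using exists_t[OF m] by blast
  have t0: "t > 0" using t by simp
  define E where "E = Ef m t"
  define W where "W = t^(m+2)"
  have E1: "E > 1" using t_facts(1)[OF m t0 t(2)] unfolding E_def .
  have cond: "E * W + 1 = t^2 * (W + E)" using t_facts(2)[OF m t0 t(2)] unfolding E_def W_def .
  have crit: "(m+1)*E^2*W - E*W^2 - E - (m+3)*W = 0"
    using t(3) unfolding psi_def E_def[symmetric] W_def[symmetric] by (simp add: algebra_simps)
  have W0: "W > 0" unfolding W_def using t0 by simp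
  have E0: "E > 0" using E1 by simp
  define e where "e = complex_of_real E"
  define p where "p = monom e (m+2) + 1"
  define q where "q = monom 1 (m+3) + monom e 1"
  define \<zeta> where "\<zeta> = (\<lambda>k::nat. cis (2 * pi * real k / real (m+2)))"
  define c where "c = (\<lambda>j::nat. if j \<le> m+2 then complex_of_real t * \<zeta> (j-1) else \<zeta> (j-(m+3)) / complex_of_real t)"
  have bij: "bij_betw \<zeta> {..<m+2} {z. z^(m+2) = 1}" unfolding \<zeta>_def
    by (rule Complex.bij_betw_roots_unity) simp
  have zpow: "\<zeta> k ^ (m+2) = 1" if "k < m+2" for k
    using bij_betwE[OF bij] that by auto
  have zinj: "inj_on \<zeta> {..<m+2}" using bij by (simp add: bij_betw_def)
  have znorm: "norm (\<zeta> k) = 1" for k unfolding \<zeta>_def by simp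
  have e0: "e \<noteq> 0" unfolding e_def using E0 by simp
  have dp: "degree p = m+2" unfolding p_def
    by (subst degree_add_eq_left) (simp_all add: degree_monom_eq e0)
  have dq: "degree q = m+3" unfolding q_def
    by (subst degree_add_eq_left) (simp_all add: degree_monom_eq e0 degree_monom_le)
  have q0: "q \<noteq> 0" using dq by auto
  have cop: "coprime p q"
  proof (rule coprime_no_common)
    fix x assume px: "poly p x = 0"
    show "poly q x \<noteq> 0"
    proof
      assume qx: "poly q x = 0"
      have "x \<noteq> 0" using px unfolding p_def by (auto simp: poly_monom)
      moreover have "poly q x = x * (x^(m+2) + e)" unfolding q_def
        by (simp add: poly_monom algebra_simps eval_nat_numeral)
      ultimately have "x^(m+2) = -e" using qx by (simp add: add_eq_0_iff2)
      then have "poly p x = 1 - e^2" unfolding p_def by (simp add: poly_monom power2_eq_square)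
      also have "\<dots> = complex_of_real (1 - E^2)" unfolding e_def by simp
      also have "\<dots> \<noteq> 0"
      proof -
        have "E^2 > 1" using E1 by (simp add: one_less_power)
        then show ?thesis by (simp only: of_real_eq_0_iff)
      qed
      finally show False using px by simp
    qed
  qed
  have rat: "is_rational_fun_of_degree p q (m+3)"
    unfolding is_rational_fun_of_degree_def using q0 cop dp dq by simp
  have pt: "poly q (c j) \<noteq> 0 \<and> (rat_eval p q has_field_derivative 0) (at (c j)) \<and> rat_eval p q (c j) = cnj (c j)"
    if j: "j \<in> {1..2*m+4}" for j
  proof (cases "j \<le> m+2")
    case True
    define k where "k = j - 1"
    have k: "k < m+2" using j True unfolding k_def by auto
    have cj: "c j = complex_of_real t * \<zeta> k" unfolding c_def k_def using True by simp
    have c0: "c j \<noteq> 0" using cj t0 znorm[of k] by auto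
    have cw: "c j ^ (m+2) = complex_of_real W" unfolding cj W_def
      by (simp only: power_mult_distrib zpow[OF k] mult_1_right of_real_power)
    have nc: "norm (c j) = t" unfolding cj using t0 by (simp add: norm_mult znorm)
    have val: "E * W + 1 = (norm (c j))^2 * (W + E)" using cond nc by simp
    show ?thesis using point[OF c0 cw W0 E0 crit val] unfolding p_def q_def e_def .
  next
    case False
    define k where "k = j - (m+3)"
    have k: "k < m+2" using j False unfolding k_def by auto
    have cj: "c j = \<zeta> k / complex_of_real t" unfolding c_def k_def using False by simp
    have c0: "c j \<noteq> 0" using cj t0 znorm[of k] by auto
    have cw: "c j ^ (m+2) = complex_of_real (1/W)" unfolding cj W_def
      by (simp only: power_divide zpow[OF k] of_real_power of_real_divide of_real_1)
    have nc: "norm (c j) = 1/t" unfolding cj using t0 by (simp add: norm_divide znorm)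
    have W1: "1/W > 0" using W0 by simp
    have crit': "(m+1)*E^2*(1/W) - E*(1/W)^2 - E - (m+3)*(1/W) = 0"
    proof -
      have "(m+1)*E^2*(1/W) - E*(1/W)^2 - E - (m+3)*(1/W)
          = ((m+1)*E^2*W - E*W^2 - E - (m+3)*W) / W^2"
        using W0 by (simp add: field_simps power2_eq_square)
      then show ?thesis using crit by simp
    qed
    have val: "E * (1/W) + 1 = (norm (c j))^2 * (1/W + E)"
    proof -
      have "E * (1/W) + 1 = (E + W) / W" using W0 by (simp add: field_simps)
      also have "\<dots> = (E * W + 1) / (t^2 * W)" using cond W0 t0 by (simp add: field_simps)
      also have "\<dots> = (1/t)^2 * (1/W + E)" using W0 t0 by (simp add: field_simps)
      finally show ?thesis using nc by simp
    qed
    show ?thesis using point[OF c0 cw W1 E0 crit' val] unfolding p_def q_def e_def .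
  qed
  have inj: "inj_on c {1..2*m+4}"
  proof (rule inj_onI)
    fix i j assume i: "i \<in> {1..2*m+4}" and j: "j \<in> {1..2*m+4}" and eq: "c i = c j"
    have nrm: "norm (c l) = (if l \<le> m+2 then t else 1/t)" for l
      unfolding c_def using t0 by (simp add: norm_mult norm_divide znorm)
    have "t * t < 1 * 1" using t0 t(2) by (intro mult_strict_mono) auto
    then have tt: "t \<noteq> 1/t" using t0 by (auto simp: field_simps)
    have same: "(i \<le> m+2) = (j \<le> m+2)"
      using arg_cong[OF eq, of norm] tt unfolding nrm by (auto split: if_splits)
    show "i = j"
    proof (cases "i \<le> m+2")
      case True
      then have "j \<le> m+2" using same by simp
      then have "\<zeta> (i-1) = \<zeta> (j-1)" using eq True t0 unfolding c_def by simp
      then have "i - 1 = j - 1" using zinj True \<open>j \<le> m+2\<close> i j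
        by (auto simp: inj_on_def)
      then show ?thesis using i j by auto
    next
      case False
      then have "\<not> j \<le> m+2" using same by simp
      then have "\<zeta> (i-(m+3)) = \<zeta> (j-(m+3))" using eq False t0 unfolding c_def by (simp add: field_simps)
      then have "i - (m+3) = j - (m+3)" using zinj False \<open>\<not> j \<le> m+2\<close> i j
        by (auto simp: inj_on_def)
      then show ?thesis using i j False \<open>\<not> j \<le> m+2\<close> by simp
    qed
  qed
  have rng: "{1..2*(m+3)-2} = {1..2*m+4}" by simp
  show ?thesis unfolding good_def rng using rat inj pt by blast
qed



lemma d3pt:
  fixes u :: complex
  assumes u: "u^2 = -3"
  defines "c \<equiv> (-2 + u) / 7"
  shows "poly [:-1,3,9,1:] c \<noteq> 0"
    "poly (pderiv [:1,3,3,5:]) c * poly [:-1,3,9,1:] c - poly [:1,3,3,5:] c * poly (pderiv [:-1,3,9,1:]) c = 0"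
    "poly [:1,3,3,5:] c = ((-2 - u)/7) * poly [:-1,3,9,1:] c"
proof -
  have qc: "poly [:-1,3,9,1:] c = (-564 - 96 * u) / 343"
    unfolding c_def using u by (simp add: pderiv_pCons algebra_simps power2_eq_square) algebra
  show "poly [:-1,3,9,1:] c \<noteq> 0"
  proof
    assume "poly [:-1,3,9,1:] c = 0"
    then have "u = -47/8" unfolding qc by (simp add: field_simps)
    then show False using u by (simp add: power2_eq_square)
  qed
  show "poly (pderiv [:1,3,3,5:]) c * poly [:-1,3,9,1:] c - poly [:1,3,3,5:] c * poly (pderiv [:-1,3,9,1:]) c = 0"
    unfolding c_def using u by (simp add: pderiv_pCons algebra_simps) algebra
  show "poly [:1,3,3,5:] c = ((-2 - u)/7) * poly [:-1,3,9,1:] c"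
    unfolding c_def using u by (simp add: algebra_simps) algebra
qed

lemma case2: "good 2"
proof -
  define p :: "complex poly" where "p = [:1,0,1:]"
  define q :: "complex poly" where "q = [:0,2:]"
  define c :: "nat \<Rightarrow> complex" where "c = (\<lambda>j. if j = 1 then 1 else -1)"
  have cop: "coprime p q"
  proof (rule coprime_no_common)
    fix x assume "poly p x = 0"
    then show "poly q x \<noteq> 0" unfolding p_def q_def by auto
  qed
  have rat: "is_rational_fun_of_degree p q 2"
    unfolding is_rational_fun_of_degree_def using cop unfolding p_def q_def by simp
  have inj: "inj_on c {1..2*2-2}" unfolding c_def by (auto simp: inj_on_def)
  have pt: "poly q (c j) \<noteq> 0 \<and> (rat_eval p q has_field_derivative 0) (at (c j)) \<and> rat_eval p q (c j) = cnj (c j)"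
    if j: "j \<in> {1..2*2-2}" for j
  proof -
    have cj: "c j = 1 \<or> c j = -1" unfolding c_def by auto
    have qn: "poly q (c j) \<noteq> 0" using cj unfolding q_def by auto
    have N: "poly (pderiv p) (c j) * poly q (c j) - poly p (c j) * poly (pderiv q) (c j) = 0"
      using cj unfolding p_def q_def by (auto simp: pderiv_pCons)
    have V: "rat_eval p q (c j) = cnj (c j)" using cj unfolding p_def q_def rat_eval_def by auto
    show ?thesis using qn rat_deriv0[OF qn N] V by simp
  qed
  show ?thesis unfolding good_def using rat inj pt by blast
qed

lemma case3: "good 3"
proof -
  define p :: "complex poly" where "p = [:1,3,3,5:]"
  define q :: "complex poly" where "q = [:-1,3,9,1:]"
  define s :: complex where "s = \<i> * complex_of_real (sqrt 3)"
  have s2: "s^2 = -3" unfolding s_def by (simp add: power_mult_distrib flip: of_real_power)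
  have ms2: "(-s)^2 = -3" using s2 by simp
  have cs: "cnj s = -s" unfolding s_def by simp
  define c :: "nat \<Rightarrow> complex" where
    "c = (\<lambda>j. if j = 1 then 1 else if j = 2 then -1 else if j = 3 then (-2 + s)/7 else (-2 + (-s))/7)"
  have cop: "coprime p q"
  proof (rule coprime_no_common)
    fix x assume px: "poly p x = 0"
    show "poly q x \<noteq> 0"
    proof
      assume qx: "poly q x = 0"
      have "(1::complex) = 0" using px qx unfolding p_def q_def by simp algebra
      then show False by simp
    qed
  qed
  have rat: "is_rational_fun_of_degree p q 3"
    unfolding is_rational_fun_of_degree_def using cop unfolding p_def q_def by simp
  have s0: "s \<noteq> 0" using s2 by auto
  have sre: "Re s = 0" unfolding s_def by simp
  have inj: "inj_on c {1..2*3-2}"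
  proof -
    have "Im s \<noteq> 0" unfolding s_def by simp
    then show ?thesis unfolding c_def inj_on_def
      by (auto simp: complex_eq_iff sre)
  qed
  have pt: "poly q (c j) \<noteq> 0 \<and> (rat_eval p q has_field_derivative 0) (at (c j)) \<and> rat_eval p q (c j) = cnj (c j)"
    if j: "j \<in> {1..2*3-2}" for j
  proof -
    have cases: "c j = 1 \<or> c j = -1 \<or> c j = (-2 + s)/7 \<or> c j = (-2 + (-s))/7" unfolding c_def by auto
    have main: "poly q (c j) \<noteq> 0 \<and>
      poly (pderiv p) (c j) * poly q (c j) - poly p (c j) * poly (pderiv q) (c j) = 0 \<and>
      poly p (c j) = cnj (c j) * poly q (c j)"
    proof -
      { assume "c j = 1 \<or> c j = -1"
        then have ?thesis unfolding p_def q_def by (auto simp: pderiv_pCons) }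
      moreover
      { assume cj: "c j = (-2 + s)/7"
        have "cnj (c j) = (-2 - s)/7" unfolding cj using cs by simp
        then have ?thesis using d3pt[OF s2] unfolding cj p_def q_def by simp }
      moreover
      { assume cj: "c j = (-2 + (-s))/7"
        have "cnj (c j) = (-2 - (-s))/7" unfolding cj using cs by simp
        then have ?thesis using d3pt[OF ms2] unfolding cj p_def q_def by simp }
      ultimately show ?thesis using cases by blast
    qed
    then have qn: "poly q (c j) \<noteq> 0" by blast
    have V: "rat_eval p q (c j) = cnj (c j)" using main unfolding rat_eval_def by simp
    show ?thesis using qn rat_deriv0[OF qn] main V by simp
  qed
  show ?thesis unfolding good_def using rat inj pt by blast
qed


theorem theorem6p6:
  fixes d :: nat
  assumes "d > 1"
  shows "\<exists>p q :: complex poly. is_rational_fun_of_degree p q d \<and>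
           (\<exists>c :: nat \<Rightarrow> complex. inj_on c {1..2*d-2} \<and>
              (\<forall>j\<in>{1..2*d-2}. poly q (c j) \<noteq> 0 \<and>
                 (rat_eval p q has_field_derivative 0) (at (c j)) \<and>
                 rat_eval p q (c j) = cnj (c j)))"
proof -
  have "d = 2 \<or> d = 3 \<or> (\<exists>m. m \<ge> 1 \<and> d = m+3)" using assms by presburger
  then have "good d" using case2 case3 case_gen by auto
  then show ?thesis unfolding good_def .
qed

end
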